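(* Let $N\ge2$, let $W_1,\dots,W_N\in\mathbb{R}^{p\times q}$, $X_1,\dots,X_N\in\mathbb{R}^{q\times r}$, $\widetilde X_1,\dots,\widetilde X_N\in\mathbb{R}^{p\times\widetilde q}$ and $V_1,\dots,V_N\in\mathbb{R}^{\widetilde q\times r}$ be matrices, $\bar X=\frac1N\sum_kX_k$, $\bar{\widetilde X}=\frac1N\sum_k\widetilde X_k$. For a permutation $\pi$ of $[N]$ and $k\in[N]$ define \[\Sigma^\pi_{\ge k}=\frac1{N+1-k}\sum_{i=k}^N(X_{\pi(i)}-\bar X)(X_{\pi(i)}-\bar X)^\top,\qquad\widetilde\Sigma^\pi_{\ge k}=\frac1{N+1-k}\sum_{i=k}^N(\widetilde X_{\pi(i)}-\bar{\widetilde X})^\top(\widetilde X_{\pi(i)}-\bar{\widetilde X}).\] Then, with $\mathscr{S}_N$ the set of permutations of $[N]$, in the positive semidefinite order, \[ \frac1{N!}\sum_{\pi\in\mathscr{S}_N}\sum_{k=1}^NW_{\pi(k)}\Sigma^\pi_{\ge k}W_{\pi(k)}^\top\preceq\frac{\widetilde\sigma^2_X}{1+\epsilon_N}\sum_{k=1}^NW_kW_k^\top,\qquad\frac1{N!}\sum_{\pi\in\mathscr{S}_N}\sum_{k=1}^NV_{\pi(k)}^\top\widetilde\Sigma^\pi_{\ge k}V_{\pi(k)}\preceq\frac{\widetilde\sigma^2_{\widetilde X}}{1+\epsilon_N}\sum_{k=1}^NV_k^\top V_k. \]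
   Context: $\|\cdot\|$ is the operator norm. $\Sigma=\frac1N\sum_k(X_k-\bar X)(X_k-\bar X)^\top$, $\widetilde\Sigma=\frac1N\sum_k(\widetilde X_k-\bar{\widetilde X})^\top(\widetilde X_k-\bar{\widetilde X})$, $\widetilde\sigma^2_X=\|\Sigma\|+\epsilon_N\max_k\|X_k-\bar X\|^2$, $\widetilde\sigma^2_{\widetilde X}=\|\widetilde\Sigma\|+\epsilon_N\max_k\|\widetilde X_k-\bar{\widetilde X}\|^2$. $H_n=\sum_{j\le n}\frac1j$, $\epsilon_n=\frac{H_n-1}{n-H_n}$ for $n\ge2$. *)

theory Defs
  imports "HOL-Analysis.Analysis"
begin

definition opnorm :: "real^'n^'m \<Rightarrow> real" where
  "opnorm A = onorm (\<lambda>v. A *v v)"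

definition psd :: "real^'n^'n \<Rightarrow> bool" where
  "psd M \<longleftrightarrow> transpose M = M \<and> (\<forall>x. 0 \<le> x \<bullet> (M *v x))"

definition loewner_le :: "real^'n^'n \<Rightarrow> real^'n^'n \<Rightarrow> bool" where
  "loewner_le A B \<longleftrightarrow> psd (B - A)"

definition eps_N :: "nat \<Rightarrow> real" where
  "eps_N n = (harm n - 1) / (real n - harm n)"

definition mat_mean :: "nat \<Rightarrow> (nat \<Rightarrow> real^'b^'a) \<Rightarrow> real^'b^'a" where
  "mat_mean N X = (1 / real N) *\<^sub>R (\<Sum>k=1..N. X k)"

definition Sigma_l :: "nat \<Rightarrow> (nat \<Rightarrow> real^'b^'a) \<Rightarrow> real^'a^'a" where
  "Sigma_l N X = (1 / real N) *\<^sub>R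
     (\<Sum>k=1..N. (X k - mat_mean N X) ** transpose (X k - mat_mean N X))"

definition Sigma_r :: "nat \<Rightarrow> (nat \<Rightarrow> real^'b^'a) \<Rightarrow> real^'b^'b" where
  "Sigma_r N X = (1 / real N) *\<^sub>R
     (\<Sum>k=1..N. transpose (X k - mat_mean N X) ** (X k - mat_mean N X))"

definition sigma2_l :: "nat \<Rightarrow> (nat \<Rightarrow> real^'b^'a) \<Rightarrow> real" where
  "sigma2_l N X = opnorm (Sigma_l N X)
     + eps_N N * Max ((\<lambda>k. (opnorm (X k - mat_mean N X))^2) ` {1..N})"

definition sigma2_r :: "nat \<Rightarrow> (nat \<Rightarrow> real^'b^'a) \<Rightarrow> real" where
  "sigma2_r N X = opnorm (Sigma_r N X)
     + eps_N N * Max ((\<lambda>k. (opnorm (X k - mat_mean N X))^2) ` {1..N})"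

definition SigmaPi_l :: "nat \<Rightarrow> (nat \<Rightarrow> real^'b^'a) \<Rightarrow> (nat \<Rightarrow> nat) \<Rightarrow> nat \<Rightarrow> real^'a^'a" where
  "SigmaPi_l N X \<pi> k = (1 / real (N + 1 - k)) *\<^sub>R
     (\<Sum>i=k..N. (X (\<pi> i) - mat_mean N X) ** transpose (X (\<pi> i) - mat_mean N X))"

definition SigmaPi_r :: "nat \<Rightarrow> (nat \<Rightarrow> real^'b^'a) \<Rightarrow> (nat \<Rightarrow> nat) \<Rightarrow> nat \<Rightarrow> real^'b^'b" where
  "SigmaPi_r N X \<pi> k = (1 / real (N + 1 - k)) *\<^sub>R
     (\<Sum>i=k..N. transpose (X (\<pi> i) - mat_mean N X) ** (X (\<pi> i) - mat_mean N X))"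

end

theory Submission
  imports Defs
begin


lemma perm_sum_single:
  fixes h :: "'a \<Rightarrow> real"
  assumes fin: "finite S" and k: "k \<in> S"
  shows "(\<Sum>\<pi>\<in>{\<pi>. \<pi> permutes S}. h (\<pi> k)) = fact (card S - 1) * (\<Sum>j\<in>S. h j)"
proof -
  let ?P = "{\<pi>. \<pi> permutes S}"
  have eq: "(\<Sum>\<pi>\<in>?P. h (\<pi> k')) = (\<Sum>\<pi>\<in>?P. h (\<pi> k))" if k': "k' \<in> S" for k'
  proof -
    have q: "Transposition.transpose k' k permutes S" by (rule permutes_swap_id[OF k' k])
    show ?thesis
      using sum_permutations_compose_right[OF q, of "\<lambda>\<pi>. h (\<pi> k')"] by simp
  qed
  have "(\<Sum>k'\<in>S. \<Sum>\<pi>\<in>?P. h (\<pi> k')) = (\<Sum>\<pi>\<in>?P. \<Sum>k'\<in>S. h (\<pi> k'))" by (rule sum.swap)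
  also have "\<dots> = (\<Sum>\<pi>\<in>?P. \<Sum>j\<in>S. h j)"
  proof (rule sum.cong[OF refl])
    fix \<pi> assume "\<pi> \<in> ?P"
    then have p: "\<pi> permutes S" by simp
    show "(\<Sum>k'\<in>S. h (\<pi> k')) = (\<Sum>j\<in>S. h j)"
      using sum.permute[OF p, of h] by (simp add: comp_def)
  qed
  also have "\<dots> = fact (card S) * (\<Sum>j\<in>S. h j)"
    using card_permutations[OF refl fin] by simp
  finally have "real (card S) * (\<Sum>\<pi>\<in>?P. h (\<pi> k)) = fact (card S) * (\<Sum>j\<in>S. h j)"
    using eq by simp
  moreover have "card S \<ge> 1" using fin k by (auto simp: Suc_le_eq card_gt_0_iff)
  moreover have "(fact (card S) :: real) = real (card S) * fact (card S - 1)"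
  proof -
    obtain m where m: "card S = Suc m" using \<open>card S \<ge> 1\<close> by (cases "card S") auto
    show ?thesis unfolding m by simp
  qed
  ultimately show ?thesis by simp
qed

lemma perm_sum_pair:
  fixes g :: "'a \<Rightarrow> 'a \<Rightarrow> real"
  assumes fin: "finite S" and k: "k \<in> S" and i: "i \<in> S" and ki: "k \<noteq> i"
  shows "(\<Sum>\<pi>\<in>{\<pi>. \<pi> permutes S}. g (\<pi> k) (\<pi> i))
     = fact (card S - 2) * ((\<Sum>j\<in>S. \<Sum>l\<in>S. g j l) - (\<Sum>j\<in>S. g j j))"
proof -
  let ?P = "{\<pi>. \<pi> permutes S}"
  let ?A = "\<Sum>\<pi>\<in>?P. g (\<pi> k) (\<pi> i)"
  have eq: "(\<Sum>\<pi>\<in>?P. g (\<pi> k) (\<pi> i')) = ?A" if i': "i' \<in> S - {k}" for i'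
  proof -
    have q: "Transposition.transpose i' i permutes S" using i' i by (intro permutes_swap_id) auto
    have "Transposition.transpose i' i k = k" using i' ki by auto
    then show ?thesis
      using sum_permutations_compose_right[OF q, of "\<lambda>\<pi>. g (\<pi> k) (\<pi> i')"] by simp
  qed
  have "(\<Sum>i'\<in>S-{k}. \<Sum>\<pi>\<in>?P. g (\<pi> k) (\<pi> i')) = (\<Sum>\<pi>\<in>?P. \<Sum>i'\<in>S-{k}. g (\<pi> k) (\<pi> i'))"
    by (rule sum.swap)
  also have "\<dots> = (\<Sum>\<pi>\<in>?P. (\<Sum>l\<in>S. g (\<pi> k) l) - g (\<pi> k) (\<pi> k))"
  proof (rule sum.cong[OF refl])
    fix \<pi> assume "\<pi> \<in> ?P"
    then have p: "\<pi> permutes S" by simp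
    have "(\<Sum>i'\<in>S-{k}. g (\<pi> k) (\<pi> i')) = (\<Sum>i'\<in>S. g (\<pi> k) (\<pi> i')) - g (\<pi> k) (\<pi> k)"
      using fin k by (simp add: sum_diff1)
    also have "(\<Sum>i'\<in>S. g (\<pi> k) (\<pi> i')) = (\<Sum>l\<in>S. g (\<pi> k) l)"
      using sum.permute[OF p, of "g (\<pi> k)"] by (simp add: comp_def)
    finally show "(\<Sum>i'\<in>S-{k}. g (\<pi> k) (\<pi> i')) = (\<Sum>l\<in>S. g (\<pi> k) l) - g (\<pi> k) (\<pi> k)" .
  qed
  also have "\<dots> = (\<Sum>\<pi>\<in>?P. (\<Sum>l\<in>S. g (\<pi> k) l)) - (\<Sum>\<pi>\<in>?P. g (\<pi> k) (\<pi> k))"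
    by (rule sum_subtractf)
  also have "\<dots> = fact (card S - 1) * ((\<Sum>j\<in>S. \<Sum>l\<in>S. g j l) - (\<Sum>j\<in>S. g j j))"
    using perm_sum_single[OF fin k, of "\<lambda>j. \<Sum>l\<in>S. g j l"] perm_sum_single[OF fin k, of "\<lambda>j. g j j"]
    by (simp add: right_diff_distrib)
  finally have "real (card S - 1) * ?A = fact (card S - 1) * ((\<Sum>j\<in>S. \<Sum>l\<in>S. g j l) - (\<Sum>j\<in>S. g j j))"
    using eq fin k by simp
  moreover have "card S \<ge> 2"
  proof -
    have "{k, i} \<subseteq> S" using k i by auto
    then have "card {k, i} \<le> card S" using fin by (rule card_mono[rotated])
    then show ?thesis using ki by simp
  qed
  moreover have "(fact (card S - 1) :: real) = real (card S - 1) * fact (card S - 2)"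
  proof -
    obtain m where m: "card S = Suc (Suc m)" using \<open>card S \<ge> 2\<close>
      by (intro that[of "card S - 2"]) simp
    show ?thesis unfolding m by simp
  qed
  ultimately have e: "real (card S - 1) * ?A = real (card S - 1) * (fact (card S - 2) * ((\<Sum>j\<in>S. \<Sum>l\<in>S. g j l) - (\<Sum>j\<in>S. g j j)))"
    by (simp only: mult.assoc)
  have nz: "real (card S - 1) \<noteq> 0" using \<open>card S \<ge> 2\<close> by simp
  show ?thesis by (rule iffD1[OF mult_left_cancel[OF nz] e])
qed



lemma harm_rev: "(\<Sum>k=1..N. 1 / real (N + 1 - k)) = harm N"
proof -
  have "(\<Sum>k=1..N. 1 / real (N + 1 - k)) = (\<Sum>k=1..N. 1 / real (N + 1 - (N + 1 - k)))"
    by (rule sum.atLeastAtMost_rev)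
  also have "\<dots> = (\<Sum>k=1..N. inverse (real k))"
    by (rule sum.cong[OF refl]) (auto simp: divide_inverse)
  finally show ?thesis by (simp add: harm_def)
qed

lemma harm_rev2: "(\<Sum>k=1..N. real (N - k) / real (N + 1 - k)) = real N - harm N"
proof -
  have "(\<Sum>k=1..N. real (N - k) / real (N + 1 - k)) = (\<Sum>k=1..N. 1 - 1 / real (N + 1 - k))"
  proof (rule sum.cong[OF refl])
    fix k assume "k \<in> {1..N}"
    then have "real (N + 1 - k) = real (N - k) + 1" "real (N + 1 - k) > 0" by auto
    then show "real (N - k) / real (N + 1 - k) = 1 - 1 / real (N + 1 - k)"
      by (simp add: field_simps)
  qed
  also have "\<dots> = (\<Sum>k=1..N. 1) - (\<Sum>k=1..N. 1 / real (N + 1 - k))"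
    by (rule sum_subtractf)
  also have "\<dots> = real N - harm N" by (simp only: harm_rev) simp
  finally show ?thesis .
qed

lemma perm_main:
  fixes g :: "nat \<Rightarrow> nat \<Rightarrow> real"
  assumes N: "N \<ge> 2"
  shows "(\<Sum>\<pi>\<in>{\<pi>. \<pi> permutes {1..N}}. \<Sum>k=1..N. (1 / real (N + 1 - k)) * (\<Sum>i=k..N. g (\<pi> k) (\<pi> i)))
    = fact N * ((harm N - 1) / (real N - 1) * (\<Sum>j=1..N. g j j)
        + (real N - harm N) / (real N * (real N - 1)) * (\<Sum>j=1..N. \<Sum>l=1..N. g j l))"
proof -
  let ?P = "{\<pi>. \<pi> permutes {1..N}}"
  define D where "D = (\<Sum>j=1..N. g j j)"
  define T where "T = (\<Sum>j=1..N. \<Sum>l=1..N. g j l)"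
  define H where "H = (harm N :: real)"
  have inner: "(\<Sum>\<pi>\<in>?P. \<Sum>i=k..N. g (\<pi> k) (\<pi> i))
      = fact (N - 1) * D + real (N - k) * (fact (N - 2) * (T - D))" if k: "k \<in> {1..N}" for k
  proof -
    have "(\<Sum>\<pi>\<in>?P. \<Sum>i=k..N. g (\<pi> k) (\<pi> i)) = (\<Sum>i=k..N. \<Sum>\<pi>\<in>?P. g (\<pi> k) (\<pi> i))"
      by (rule sum.swap)
    also have "\<dots> = (\<Sum>\<pi>\<in>?P. g (\<pi> k) (\<pi> k)) + (\<Sum>i=Suc k..N. \<Sum>\<pi>\<in>?P. g (\<pi> k) (\<pi> i))"
      using k by (intro sum.atLeast_Suc_atMost) auto
    also have "(\<Sum>\<pi>\<in>?P. g (\<pi> k) (\<pi> k)) = fact (N - 1) * D"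
      using perm_sum_single[of "{1..N}" k "\<lambda>j. g j j"] k by (simp add: D_def)
    also have "(\<Sum>i=Suc k..N. \<Sum>\<pi>\<in>?P. g (\<pi> k) (\<pi> i)) = (\<Sum>i=Suc k..N. fact (N - 2) * (T - D))"
    proof (rule sum.cong[OF refl])
      fix i assume "i \<in> {Suc k..N}"
      then show "(\<Sum>\<pi>\<in>?P. g (\<pi> k) (\<pi> i)) = fact (N - 2) * (T - D)"
        using perm_sum_pair[of "{1..N}" k i g] k by (simp add: D_def T_def)
    qed
    also have "\<dots> = real (N - k) * (fact (N - 2) * (T - D))" by simp
    finally show ?thesis .
  qed
  have "(\<Sum>\<pi>\<in>?P. \<Sum>k=1..N. (1 / real (N + 1 - k)) * (\<Sum>i=k..N. g (\<pi> k) (\<pi> i)))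
     = (\<Sum>k=1..N. \<Sum>\<pi>\<in>?P. (1 / real (N + 1 - k)) * (\<Sum>i=k..N. g (\<pi> k) (\<pi> i)))"
    by (rule sum.swap)
  also have "\<dots> = (\<Sum>k=1..N. (1 / real (N + 1 - k)) * (fact (N - 1) * D)
       + (real (N - k) / real (N + 1 - k)) * (fact (N - 2) * (T - D)))"
  proof (rule sum.cong[OF refl])
    fix k assume k: "k \<in> {1..N}"
    show "(\<Sum>\<pi>\<in>?P. (1 / real (N + 1 - k)) * (\<Sum>i=k..N. g (\<pi> k) (\<pi> i))) =
      (1 / real (N + 1 - k)) * (fact (N - 1) * D) + (real (N - k) / real (N + 1 - k)) * (fact (N - 2) * (T - D))"
    proof -
      have "(\<Sum>\<pi>\<in>?P. (1 / real (N + 1 - k)) * (\<Sum>i=k..N. g (\<pi> k) (\<pi> i)))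
          = (1 / real (N + 1 - k)) * (\<Sum>\<pi>\<in>?P. \<Sum>i=k..N. g (\<pi> k) (\<pi> i))"
        by (rule sum_distrib_left[symmetric])
      also have "\<dots> = (1 / real (N + 1 - k)) * (fact (N - 1) * D + real (N - k) * (fact (N - 2) * (T - D)))"
        by (simp only: inner[OF k])
      finally show ?thesis by (simp add: algebra_simps)
    qed
  qed
  also have "\<dots> = H * (fact (N - 1) * D) + (real N - H) * (fact (N - 2) * (T - D))"
  proof -
    have "(\<Sum>k=1..N. (1 / real (N + 1 - k)) * (fact (N - 1) * D)
       + (real (N - k) / real (N + 1 - k)) * (fact (N - 2) * (T - D)))
      = (\<Sum>k=1..N. 1 / real (N + 1 - k)) * (fact (N - 1) * D)
       + (\<Sum>k=1..N. real (N - k) / real (N + 1 - k)) * (fact (N - 2) * (T - D))"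
      by (simp only: sum.distrib sum_distrib_right)
    then show ?thesis by (simp only: harm_rev harm_rev2 H_def)
  qed
  also have "\<dots> = fact N * ((H - 1) / (real N - 1) * D + (real N - H) / (real N * (real N - 1)) * T)"
  proof -
    obtain m where m: "N = Suc (Suc m)" using N by (intro that[of "N - 2"]) simp
    have f: "(fact N :: real) = real N * (real N - 1) * fact (N - 2)"
            "(fact (N - 1) :: real) = (real N - 1) * fact (N - 2)"
      unfolding m by (simp_all add: algebra_simps)
    have "real N - 1 > 0" "real N > 0" using N by auto
    then have a: "real N * (real N - 1) * fact (N - 2) * ((H - 1) / (real N - 1)) = real N * fact (N - 2) * (H - 1)"
      and b: "real N * (real N - 1) * fact (N - 2) * ((real N - H) / (real N * (real N - 1))) = fact (N - 2) * (real N - H)"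
      by (simp_all add: field_simps)
    show ?thesis unfolding f distrib_left mult.assoc[symmetric] a b by (simp add: algebra_simps)
  qed
  finally show ?thesis by (simp add: D_def T_def H_def)
qed



definition qf :: "real^'n^'n \<Rightarrow> real^'n \<Rightarrow> real" where
  "qf M x = x \<bullet> (M *v x)"

lemma qf_add: "qf (A + B) x = qf A x + qf B x"
  by (simp add: qf_def matrix_vector_mult_add_rdistrib inner_add_right)

lemma qf_diff: "qf (A - B) x = qf A x - qf B x"
  by (simp add: qf_def matrix_vector_mult_diff_rdistrib inner_diff_right)

lemma qf_scale: "qf (c *\<^sub>R A) x = c * qf A x"
  by (simp add: qf_def scaleR_matrix_vector_assoc[symmetric])

lemma qf_sum: "qf (sum f S) x = (\<Sum>i\<in>S. qf (f i) x)"
proof (induction S rule: infinite_finite_induct)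
  case (infinite S) then show ?case by (simp add: qf_def)
next
  case empty then show ?case by (simp add: qf_def)
next
  case (insert a F) then show ?case by (simp add: qf_add)
qed

lemma inner_matrix_transpose: "(x::real^'m) \<bullet> ((B::real^'n^'m) *v z) = (transpose B *v x) \<bullet> z"
  by (simp add: dot_lmul_matrix)

lemma qf_conj: "qf ((B::real^'q^'p) ** Y ** transpose B) x = qf Y (transpose B *v x)"
  unfolding qf_def
  by (simp add: matrix_vector_mul_assoc[symmetric] inner_matrix_transpose)

lemma qf_gram: "qf ((B::real^'q^'p) ** transpose B) x = (norm (transpose B *v x))^2"
  unfolding qf_def
  by (simp add: matrix_vector_mul_assoc[symmetric] inner_matrix_transpose power2_norm_eq_inner)

lemma transpose_sum: "transpose (sum f S) = (\<Sum>i\<in>S. transpose (f i))"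
  by (simp add: transpose_def vec_eq_iff sum_component)

lemma transpose_diff: "transpose (A - B) = transpose A - transpose B"
  by (simp add: transpose_def vec_eq_iff)

lemma harm_lt: "harm (Suc (Suc n)) < (real (Suc (Suc n)) :: real)"
proof (induction n)
  case 0 then show ?case by (simp add: harm_Suc harm_def)
next
  case (Suc n)
  have "inverse (real (Suc (Suc (Suc n)))) \<le> 1" by (simp add: inverse_le_1_iff)
  with Suc show ?case by (simp only: harm_Suc[of "Suc (Suc n)"])
qed

lemma harm_ge1: "N \<ge> 1 \<Longrightarrow> (harm N :: real) \<ge> 1"
  using harm_mono[of 1 N] by (simp add: harm_def)



lemma main_generic:
  fixes B :: "nat \<Rightarrow> real^'q^'p" and Y :: "nat \<Rightarrow> real^'q^'q" and S :: "real^'q^'q"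
  assumes N: "N \<ge> 2"
    and Ysym: "\<And>l. transpose (Y l) = Y l"
    and SY: "S = (1 / real N) *\<^sub>R (\<Sum>l=1..N. Y l)"
    and YM: "\<And>l y. l \<in> {1..N} \<Longrightarrow> qf (Y l) y \<le> M * (norm y)^2"
    and Ss: "\<And>y. qf S y \<le> s * (norm y)^2"
  shows "loewner_le
     ((1 / fact N) *\<^sub>R (\<Sum>\<pi>\<in>{\<pi>. \<pi> permutes {1..N}}. \<Sum>k=1..N.
         B (\<pi> k) ** ((1 / real (N + 1 - k)) *\<^sub>R (\<Sum>i=k..N. Y (\<pi> i))) ** transpose (B (\<pi> k))))
     (((s + eps_N N * M) / (1 + eps_N N)) *\<^sub>R (\<Sum>k=1..N. B k ** transpose (B k)))"
proof -
  let ?P = "{\<pi>. \<pi> permutes {1..N}}"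
  define L where "L = (1 / fact N) *\<^sub>R (\<Sum>\<pi>\<in>?P. \<Sum>k=1..N.
         B (\<pi> k) ** ((1 / real (N + 1 - k)) *\<^sub>R (\<Sum>i=k..N. Y (\<pi> i))) ** transpose (B (\<pi> k)))"
  define c where "c = (s + eps_N N * M) / (1 + eps_N N)"
  define R where "R = c *\<^sub>R (\<Sum>k=1..N. B k ** transpose (B k))"
  define H where "H = (harm N :: real)"
  have H1: "H \<ge> 1" using N harm_ge1 by (simp add: H_def)
  have HN: "H < real N"
  proof -
    obtain m where m: "N = Suc (Suc m)" using N by (intro that[of "N - 2"]) simp
    show ?thesis unfolding H_def m by (rule harm_lt)
  qed
  have N1: "real N - 1 > 0" using N by simp
  define \<alpha> where "\<alpha> = (H - 1) / (real N - 1)"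
  define \<beta> where "\<beta> = (real N - H) / (real N * (real N - 1))"
  have \<alpha>0: "\<alpha> \<ge> 0" using H1 N1 by (simp add: \<alpha>_def)
  have \<beta>0: "\<beta> \<ge> 0" using HN N1 by (simp add: \<beta>_def)
  have c_eq: "c = \<alpha> * M + \<beta> * real N * s"
  proof -
    have e: "eps_N N = (H - 1) / (real N - H)" by (simp add: eps_N_def H_def)
    define d where "d = real N - H"
    have d0: "d > 0" using HN by (simp add: d_def)
    have e1: "1 + eps_N N = (real N - 1) / d" unfolding e d_def using d0 by (simp add: field_simps d_def)
    have "c = (s + eps_N N * M) * d / (real N - 1)" unfolding c_def e1 by (simp add: divide_divide_eq_right)
    also have "(s + eps_N N * M) * d = s * d + (H - 1) * M" unfolding e using d0 by (simp add: field_simps d_def)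
    finally have c1: "c = (s * d + (H - 1) * M) / (real N - 1)" .
    have "\<beta> * real N = d / (real N - 1)" unfolding \<beta>_def d_def using N by (simp add: field_simps)
    then have "\<alpha> * M + \<beta> * real N * s = ((H - 1) * M + d * s) / (real N - 1)"
      unfolding \<alpha>_def by (simp add: add_divide_distrib)
    then show ?thesis unfolding c1 by (simp add: algebra_simps)
  qed
  have symL: "transpose L = L"
    unfolding L_def
    by (simp add: transpose_sum transpose_scalar matrix_transpose_mul Ysym matrix_mul_assoc)
  have symR: "transpose R = R"
    unfolding R_def
    by (simp add: transpose_sum transpose_scalar matrix_transpose_mul)
  have quad: "qf L x \<le> qf R x" for x
  proof -
    define z where "z j = transpose (B j) *v x" for j
    define g where "g j l = qf (Y l) (z j)" for j l
    have "qf L x = (1 / fact N) * (\<Sum>\<pi>\<in>?P. \<Sum>k=1..N. (1 / real (N + 1 - k)) * (\<Sum>i=k..N. g (\<pi> k) (\<pi> i)))"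
      unfolding L_def g_def z_def by (simp add: qf_scale qf_sum qf_conj)
    also have "\<dots> = \<alpha> * (\<Sum>j=1..N. g j j) + \<beta> * (\<Sum>j=1..N. \<Sum>l=1..N. g j l)"
      unfolding perm_main[OF N] \<alpha>_def \<beta>_def H_def by simp
    also have "\<dots> \<le> \<alpha> * (\<Sum>j=1..N. M * (norm (z j))^2) + \<beta> * (\<Sum>j=1..N. real N * s * (norm (z j))^2)"
    proof (intro add_mono mult_left_mono sum_mono \<alpha>0 \<beta>0)
      fix j assume "j \<in> {1..N}"
      then show "g j j \<le> M * (norm (z j))^2" unfolding g_def by (rule YM)
    next
      fix j assume "j \<in> {1..N}"
      have "(\<Sum>l=1..N. g j l) = qf (\<Sum>l=1..N. Y l) (z j)" unfolding g_def by (simp add: qf_sum)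
      also have "(\<Sum>l=1..N. Y l) = real N *\<^sub>R S" using SY N by simp
      also have "qf (real N *\<^sub>R S) (z j) = real N * qf S (z j)" by (rule qf_scale)
      also have "\<dots> \<le> real N * (s * (norm (z j))^2)" using Ss by (intro mult_left_mono) auto
      finally show "(\<Sum>l=1..N. g j l) \<le> real N * s * (norm (z j))^2" by simp
    qed
    also have "\<dots> = c * (\<Sum>j=1..N. (norm (z j))^2)"
      unfolding c_eq by (simp add: sum_distrib_left[symmetric] algebra_simps)
    also have "\<dots> = qf R x"
      unfolding R_def z_def by (simp add: qf_scale qf_sum qf_gram)
    finally show ?thesis .
  qed
  have "psd (R - L)"
    unfolding psd_def
  proof
    show "transpose (R - L) = R - L" by (simp add: transpose_diff symL symR)
    show "\<forall>x. 0 \<le> x \<bullet> ((R - L) *v x)"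
      using quad by (simp add: qf_diff[unfolded qf_def] qf_def)
  qed
  then show ?thesis unfolding loewner_le_def L_def R_def c_def .
qed



lemma opnorm_mv: "norm ((A::real^'n^'m) *v v) \<le> opnorm A * norm v"
  unfolding opnorm_def by (rule onorm[OF matrix_vector_mul_bounded_linear])

lemma opnorm_nonneg: "opnorm (A::real^'n^'m) \<ge> 0"
  unfolding opnorm_def by (rule onorm_pos_le[OF matrix_vector_mul_bounded_linear])

lemma opnorm_tmv: "norm (transpose (A::real^'n^'m) *v v) \<le> opnorm A * norm v"
proof (cases "norm (transpose A *v v) = 0")
  case True then show ?thesis using opnorm_nonneg[of A] by simp
next
  case False
  have "(norm (transpose A *v v))^2 = v \<bullet> (A *v (transpose A *v v))"
    by (simp add: inner_matrix_transpose power2_norm_eq_inner)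
  also have "\<dots> \<le> norm v * norm (A *v (transpose A *v v))" by (rule norm_cauchy_schwarz)
  also have "\<dots> \<le> norm v * (opnorm A * norm (transpose A *v v))"
    by (intro mult_left_mono opnorm_mv) simp
  finally have "norm (transpose A *v v) * norm (transpose A *v v) \<le> (opnorm A * norm v) * norm (transpose A *v v)"
    by (simp add: power2_eq_square algebra_simps)
  then show ?thesis using False by (simp add: mult_le_cancel_right)
qed

lemma qf_opnorm: "qf (S::real^'n^'n) y \<le> opnorm S * (norm y)^2"
proof -
  have "qf S y \<le> norm y * norm (S *v y)" unfolding qf_def by (rule norm_cauchy_schwarz)
  also have "\<dots> \<le> norm y * (opnorm S * norm y)" by (intro mult_left_mono opnorm_mv) simp
  finally show ?thesis by (simp add: power2_eq_square algebra_simps)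
qed

lemma sq_le: "0 \<le> a \<Longrightarrow> a \<le> b \<Longrightarrow> (a::real)^2 \<le> b^2"
  by (simp add: power_mono)

theorem lemma11:
  fixes N :: nat
    and W :: "nat \<Rightarrow> real^'q^'p"
    and X :: "nat \<Rightarrow> real^'r^'q"
    and Xt :: "nat \<Rightarrow> real^'qt^'p"
    and V :: "nat \<Rightarrow> real^'r^'qt"
  assumes "N \<ge> 2"
  shows "loewner_le
           ((1 / fact N) *\<^sub>R (\<Sum>\<pi>\<in>{\<pi>. \<pi> permutes {1..N}}. \<Sum>k=1..N.
               W (\<pi> k) ** SigmaPi_l N X \<pi> k ** transpose (W (\<pi> k))))
           ((sigma2_l N X / (1 + eps_N N)) *\<^sub>R (\<Sum>k=1..N. W k ** transpose (W k)))
       \<and> loewner_le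
           ((1 / fact N) *\<^sub>R (\<Sum>\<pi>\<in>{\<pi>. \<pi> permutes {1..N}}. \<Sum>k=1..N.
               transpose (V (\<pi> k)) ** SigmaPi_r N Xt \<pi> k ** V (\<pi> k)))
           ((sigma2_r N Xt / (1 + eps_N N)) *\<^sub>R (\<Sum>k=1..N. transpose (V k) ** V k))"
proof
  let ?M = "Max ((\<lambda>k. (opnorm (X k - mat_mean N X))^2) ` {1..N})"
  have Mge: "(opnorm (X l - mat_mean N X))^2 \<le> ?M" if "l \<in> {1..N}" for l
    using that by (intro Max_ge) auto
  have YM: "qf ((X l - mat_mean N X) ** transpose (X l - mat_mean N X)) y \<le> ?M * (norm y)^2"
    if l: "l \<in> {1..N}" for l y
  proof -
    have "qf ((X l - mat_mean N X) ** transpose (X l - mat_mean N X)) y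
        = (norm (transpose (X l - mat_mean N X) *v y))^2" by (rule qf_gram)
    also have "\<dots> \<le> (opnorm (X l - mat_mean N X) * norm y)^2"
      by (intro sq_le opnorm_tmv) simp
    also have "\<dots> \<le> ?M * (norm y)^2"
      unfolding power_mult_distrib by (intro mult_right_mono Mge[OF l]) simp
    finally show ?thesis .
  qed
  show "loewner_le
           ((1 / fact N) *\<^sub>R (\<Sum>\<pi>\<in>{\<pi>. \<pi> permutes {1..N}}. \<Sum>k=1..N.
               W (\<pi> k) ** SigmaPi_l N X \<pi> k ** transpose (W (\<pi> k))))
           ((sigma2_l N X / (1 + eps_N N)) *\<^sub>R (\<Sum>k=1..N. W k ** transpose (W k)))"
    unfolding SigmaPi_l_def sigma2_l_def
    by (rule main_generic[where Y = "\<lambda>l. (X l - mat_mean N X) ** transpose (X l - mat_mean N X)"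
          and S = "Sigma_l N X", OF assms])
      (simp add: matrix_transpose_mul, simp add: Sigma_l_def, (rule YM, assumption), rule qf_opnorm)
next
  let ?M = "Max ((\<lambda>k. (opnorm (Xt k - mat_mean N Xt))^2) ` {1..N})"
  have Mge: "(opnorm (Xt l - mat_mean N Xt))^2 \<le> ?M" if "l \<in> {1..N}" for l
    using that by (intro Max_ge) auto
  have YM: "qf (transpose (Xt l - mat_mean N Xt) ** (Xt l - mat_mean N Xt)) y \<le> ?M * (norm y)^2"
    if l: "l \<in> {1..N}" for l y
  proof -
    have "qf (transpose (Xt l - mat_mean N Xt) ** transpose (transpose (Xt l - mat_mean N Xt))) y
        = (norm (transpose (transpose (Xt l - mat_mean N Xt)) *v y))^2" by (rule qf_gram)
    then have "qf (transpose (Xt l - mat_mean N Xt) ** (Xt l - mat_mean N Xt)) y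
        = (norm ((Xt l - mat_mean N Xt) *v y))^2" by simp
    also have "\<dots> \<le> (opnorm (Xt l - mat_mean N Xt) * norm y)^2"
      by (intro sq_le opnorm_mv) simp
    also have "\<dots> \<le> ?M * (norm y)^2"
      unfolding power_mult_distrib by (intro mult_right_mono Mge[OF l]) simp
    finally show ?thesis .
  qed
  have G: "loewner_le
     ((1 / fact N) *\<^sub>R (\<Sum>\<pi>\<in>{\<pi>. \<pi> permutes {1..N}}. \<Sum>k=1..N.
         transpose (V (\<pi> k)) ** ((1 / real (N + 1 - k)) *\<^sub>R (\<Sum>i=k..N. transpose (Xt (\<pi> i) - mat_mean N Xt) ** (Xt (\<pi> i) - mat_mean N Xt))) ** transpose (transpose (V (\<pi> k)))))
     (((opnorm (Sigma_r N Xt) + eps_N N * ?M) / (1 + eps_N N)) *\<^sub>R (\<Sum>k=1..N. transpose (V k) ** transpose (transpose (V k))))"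
    by (rule main_generic[where Y = "\<lambda>l. transpose (Xt l - mat_mean N Xt) ** (Xt l - mat_mean N Xt)"
          and S = "Sigma_r N Xt" and B = "\<lambda>j. transpose (V j)", OF assms])
      (simp add: matrix_transpose_mul, simp add: Sigma_r_def, (rule YM, assumption), rule qf_opnorm)
  then show "loewner_le
           ((1 / fact N) *\<^sub>R (\<Sum>\<pi>\<in>{\<pi>. \<pi> permutes {1..N}}. \<Sum>k=1..N.
               transpose (V (\<pi> k)) ** SigmaPi_r N Xt \<pi> k ** V (\<pi> k)))
           ((sigma2_r N Xt / (1 + eps_N N)) *\<^sub>R (\<Sum>k=1..N. transpose (V k) ** V k))"
    unfolding SigmaPi_r_def sigma2_r_def transpose_transpose .
qed


end
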